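(* Let $\eta^{(\varepsilon)}_n$, $\varepsilon\in(0,1]$, be Markov chains on $\mathbb{X}=\{1,\dots,N\}$ with transition probabilities $p_{ij}(\varepsilon)$ satisfying conditions A and D of the context for some $\varepsilon_0\in(0,1]$ and transition sets $\mathbb{Y}_i$. Fix $r\in\mathbb{X}$ and let $_r\eta^{(\varepsilon)}_n$ be the reduced Markov chain on $_r\mathbb{X}=\mathbb{X}\setminus\{r\}$, with transition probabilities $_rp_{ij}(\varepsilon)$, $i,j\in{}_r\mathbb{X}$. Then conditions A and D hold for the chains $_r\eta^{(\varepsilon)}_n$ with the same $\varepsilon_0$ and with transition sets $_r\mathbb{Y}_i=\mathbb{Y}^-_{ir}\cup\mathbb{Y}^+_{ir}$, $i\in{}_r\mathbb{X}$; in particular, for every $j\in{}_r\mathbb{Y}_i$, $i\in{}_r\mathbb{X}$, $_rp_{ij}(\varepsilon)$ admits a pivotal $(_rl^-_{ij},{}_rl^+_{ij})$-expansion $_rp_{ij}(\varepsilon)=\sum_{l={}_rl^-_{ij}}^{_rl^+_{ij}}{}_ra_{ij}[l]\varepsilon^l+{}_ro_{ij}(\varepsilon^{_rl^+_{ij}})$, $\varepsilon\in(0,\varepsilon_0]$, with $0\le{}_rl^-_{ij}\le{}_rl^+_{ij}$ and $_ra_{ij}[_rl^-_{ij}]>0$.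
   Context: A $(h,k)$-expansion of a function $A$ on $(0,\varepsilon_0]$ is a representation $A(\varepsilon)=\sum_{l=h}^k a_l\varepsilon^l+o_A(\varepsilon^k)$ with integers $h\le k$, real $a_l$, and $o_A(\varepsilon^k)/\varepsilon^k\to0$ as $\varepsilon\to0$; pivotal means $a_h\ne0$. For $\varepsilon\in(0,1]$, $\eta^{(\varepsilon)}_n$ is a homogeneous Markov chain on $\mathbb{X}=\{1,\dots,N\}$ with stochastic transition matrix $\|p_{ij}(\varepsilon)\|$. Condition A: there exist $\mathbb{Y}_i\subseteq\mathbb{X}$, $i\in\mathbb{X}$, and $\varepsilon_0\in(0,1]$ such that for $\varepsilon\in(0,\varepsilon_0]$: (a) $p_{ij}(\varepsilon)>0$ for $j\in\mathbb{Y}_i$; (b) $p_{ij}(\varepsilon)=0$ for $j\notin\mathbb{Y}_i$; (c) for every $i,j\in\mathbb{X}$ there exist $n\ge1$ and $i=l_0,\dots,l_n=j$ with $l_{k+1}\in\mathbb{Y}_{l_k}$. Condition D: for $j\in\mathbb{Y}_i$, $i\in\mathbb{X}$: $p_{ij}(\varepsilon)=\sum_{l=l^-_{ij}}^{l^+_{ij}}a_{ij}[l]\varepsilon^l+o_{ij}(\varepsilon^{l^+_{ij}})$, $\varepsilon\in(0,\varepsilon_0]$, with integers $0\le l^-_{ij}\le l^+_{ij}<\infty$, $a_{ij}[l^-_{ij}]>0$ and $o_{ij}(\varepsilon^{l^+_{ij}})/\varepsilon^{l^+_{ij}}\to0$. Reduced chain: $_r\xi_0=0$, $_r\xi_n=\min\{k>{}_r\xi_{n-1}:\eta^{(\varepsilon)}_k\ne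 r\}$, $_r\eta^{(\varepsilon)}_n=\eta^{(\varepsilon)}_{_r\xi_n}$ (started from a state in $_r\mathbb{X}$); its transition probabilities are $_rp_{ij}(\varepsilon)=p_{ij}(\varepsilon)+p_{ir}(\varepsilon)\frac{p_{rj}(\varepsilon)}{1-p_{rr}(\varepsilon)}$, $i,j\in{}_r\mathbb{X}$. Sets: $\mathbb{Y}^-_{ir}=\{j\in{}_r\mathbb{X}:j\in\mathbb{Y}_r\}$ if $r\in\mathbb{Y}_i$ and $\mathbb{Y}^-_{ir}=\emptyset$ if $r\notin\mathbb{Y}_i$; $\mathbb{Y}^+_{ir}=\{j\in{}_r\mathbb{X}:j\in\mathbb{Y}_i\}$. *)

theory Defs
  imports Complex_Main
begin

text \<open>Transition probabilities are modelled as p :: real => nat => nat => real,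
  p eps i j being p_ij(eps). State spaces are finite sets of naturals.\<close>

definition stochastic :: "nat set \<Rightarrow> (real \<Rightarrow> nat \<Rightarrow> nat \<Rightarrow> real) \<Rightarrow> bool" where
  "stochastic X p \<longleftrightarrow>
     (\<forall>\<epsilon>\<in>{0<..1}. \<forall>i\<in>X. (\<forall>j\<in>X. 0 \<le> p \<epsilon> i j) \<and> (\<Sum>j\<in>X. p \<epsilon> i j) = 1)"

definition condA :: "nat set \<Rightarrow> (nat \<Rightarrow> nat set) \<Rightarrow> real \<Rightarrow> (real \<Rightarrow> nat \<Rightarrow> nat \<Rightarrow> real) \<Rightarrow> bool" where
  "condA X Y \<epsilon>0 p \<longleftrightarrow>
     0 < \<epsilon>0 \<and> \<epsilon>0 \<le> 1 \<and> (\<forall>i\<in>X. Y i \<subseteq> X) \<and>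
     (\<forall>\<epsilon>\<in>{0<..\<epsilon>0}. \<forall>i\<in>X. \<forall>j\<in>X.
         (j \<in> Y i \<longrightarrow> p \<epsilon> i j > 0) \<and> (j \<notin> Y i \<longrightarrow> p \<epsilon> i j = 0)) \<and>
     (\<forall>i\<in>X. \<forall>j\<in>X. \<exists>n::nat. \<exists>l::nat \<Rightarrow> nat.
         n \<ge> 1 \<and> l 0 = i \<and> l n = j \<and> (\<forall>k<n. l (Suc k) \<in> Y (l k)))"

definition condD :: "nat set \<Rightarrow> (nat \<Rightarrow> nat set) \<Rightarrow> real \<Rightarrow> (real \<Rightarrow> nat \<Rightarrow> nat \<Rightarrow> real) \<Rightarrow> bool" where
  "condD X Y \<epsilon>0 p \<longleftrightarrow>
     (\<forall>i\<in>X. \<forall>j\<in>Y i. \<exists>(lm::nat) (lp::nat) (a::nat \<Rightarrow> real) (rem::real \<Rightarrow> real).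
        lm \<le> lp \<and> a lm > 0 \<and>
        (\<forall>\<epsilon>\<in>{0<..\<epsilon>0}. p \<epsilon> i j = (\<Sum>l=lm..lp. a l * \<epsilon> ^ l) + rem \<epsilon>) \<and>
        ((\<lambda>\<epsilon>. rem \<epsilon> / \<epsilon> ^ lp) \<longlongrightarrow> 0) (at_right 0))"

definition red_p :: "(real \<Rightarrow> nat \<Rightarrow> nat \<Rightarrow> real) \<Rightarrow> nat \<Rightarrow> real \<Rightarrow> nat \<Rightarrow> nat \<Rightarrow> real" where
  "red_p p r \<epsilon> i j = p \<epsilon> i j + p \<epsilon> i r * (p \<epsilon> r j / (1 - p \<epsilon> r r))"

definition Yminus :: "nat set \<Rightarrow> (nat \<Rightarrow> nat set) \<Rightarrow> nat \<Rightarrow> nat \<Rightarrow> nat set" where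
  "Yminus X Y i r = (if r \<in> Y i then {j \<in> X - {r}. j \<in> Y r} else {})"

definition Yplus :: "nat set \<Rightarrow> (nat \<Rightarrow> nat set) \<Rightarrow> nat \<Rightarrow> nat \<Rightarrow> nat set" where
  "Yplus X Y i r = {j \<in> X - {r}. j \<in> Y i}"

definition red_Y :: "nat set \<Rightarrow> (nat \<Rightarrow> nat set) \<Rightarrow> nat \<Rightarrow> nat \<Rightarrow> nat set" where
  "red_Y X Y r i = Yminus X Y i r \<union> Yplus X Y i r"

end

theory Submission imports Defs begin

definition asy :: "(real \<Rightarrow> real) \<Rightarrow> nat \<Rightarrow> real \<Rightarrow> bool" where
  "asy f m a \<longleftrightarrow> ((\<lambda>e. f e / e ^ m) \<longlongrightarrow> a) (at_right 0)"

lemma ev_le: "0 < c \<Longrightarrow> eventually (\<lambda>e::real. 0 < e \<and> e \<le> c) (at_right 0)"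
  unfolding eventually_at_right_field by (intro exI[of _ c]) auto

lemma ev_pos: "eventually (\<lambda>e::real. 0 < e) (at_right 0)"
  using ev_le[of 1] by (auto elim: eventually_mono)

lemma asy_cong: "asy f m a \<Longrightarrow> eventually (\<lambda>e. f e = g e) (at_right 0) \<Longrightarrow> asy g m a"
  unfolding asy_def by (erule Lim_transform_eventually) (auto elim: eventually_mono)

lemma asy_add_le:
  assumes "asy f m a" "asy g n b" "m \<le> n" "a > 0" "b > 0"
  shows "\<exists>k c. c > 0 \<and> asy (\<lambda>e. f e + g e) k c"
proof -
  have "((\<lambda>e. f e / e^m + (g e / e^n) * e^(n-m)) \<longlongrightarrow> a + b * 0^(n-m)) (at_right 0)"
    using assms(1,2) unfolding asy_def
    by (intro tendsto_intros) auto
  moreover have "eventually (\<lambda>e. f e / e^m + (g e / e^n) * e^(n-m) = (f e + g e)/e^m) (at_right 0)"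
    using ev_pos
  proof eventually_elim
    case (elim e)
    have "e^n = e^m * e^(n-m)" using assms(3) by (simp add: power_add[symmetric])
    then show ?case using elim by (simp add: field_simps)
  qed
  ultimately have "asy (\<lambda>e. f e + g e) m (a + b * 0^(n-m))"
    unfolding asy_def by (rule Lim_transform_eventually)
  moreover have "a + b * 0^(n-m) > 0" using assms(4,5) by (cases "n-m") auto
  ultimately show ?thesis by blast
qed

lemma asy_add:
  assumes "asy f m a" "asy g n b" "a > 0" "b > 0"
  shows "\<exists>k c. c > 0 \<and> asy (\<lambda>e. f e + g e) k c"
proof (cases "m \<le> n")
  case True then show ?thesis using asy_add_le assms by blast
next
  case False
  then obtain k c where "c > 0" "asy (\<lambda>e. g e + f e) k c"
    using asy_add_le[OF assms(2,1)] assms by fastforce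
  then show ?thesis by (auto simp: add.commute)
qed

lemma asy_mult:
  assumes "asy f m a" "asy g n b"
  shows "asy (\<lambda>e. f e * g e) (m+n) (a*b)"
proof -
  have "((\<lambda>e. (f e / e^m) * (g e / e^n)) \<longlongrightarrow> a * b) (at_right 0)"
    using assms unfolding asy_def by (intro tendsto_intros)
  moreover have "eventually (\<lambda>e. (f e / e^m) * (g e / e^n) = (f e * g e)/e^(m+n)) (at_right 0)"
    using ev_pos by eventually_elim (simp add: power_add)
  ultimately show ?thesis unfolding asy_def by (rule Lim_transform_eventually)
qed

lemma asy_div:
  assumes "asy f m a" "asy g n b" "n \<le> m" "b \<noteq> 0"
  shows "asy (\<lambda>e. f e / g e) (m-n) (a/b)"
proof -
  have "((\<lambda>e. (f e / e^m) / (g e / e^n)) \<longlongrightarrow> a / b) (at_right 0)"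
    using assms unfolding asy_def by (intro tendsto_intros) auto
  moreover have "eventually (\<lambda>e. (f e / e^m) / (g e / e^n) = (f e / g e)/e^(m-n)) (at_right 0)"
    using ev_pos
  proof eventually_elim
    case (elim e)
    have "e^m = e^n * e^(m-n)" using assms(3) by (simp add: power_add[symmetric])
    then show ?case using elim by (simp add: field_simps)
  qed
  ultimately show ?thesis unfolding asy_def by (rule Lim_transform_eventually)
qed

lemma asy_cmp:
  assumes "asy f m a" "asy g n b" "a > 0" "b > 0"
    and "eventually (\<lambda>e. 0 < f e \<and> f e \<le> g e) (at_right 0)"
  shows "n \<le> m"
proof (rule ccontr)
  assume "\<not> n \<le> m"
  then have nm: "m \<le> n" "0 < n - m" by auto
  have lim0: "((\<lambda>e. (g e / e^n) / (f e / e^m) * e^(n-m)) \<longlongrightarrow> b / a * 0^(n-m)) (at_right 0)"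
    using assms unfolding asy_def by (intro tendsto_intros) auto
  have z: "b / a * 0^(n-m) = (0::real)" using nm by simp
  have lim: "((\<lambda>e. (g e / e^n) / (f e / e^m) * e^(n-m)) \<longlongrightarrow> 0) (at_right 0)"
    using lim0 unfolding z .
  have "eventually (\<lambda>e. 1 \<le> (g e / e^n) / (f e / e^m) * e^(n-m)) (at_right 0)"
    using ev_pos assms(5)
  proof eventually_elim
    case (elim e)
    have "e^n = e^m * e^(n-m)" using nm by (simp add: power_add[symmetric])
    then have "(g e / e^n) / (f e / e^m) * e^(n-m) = g e / f e" using elim by (simp add: field_simps)
    then show ?case using elim by simp
  qed
  from tendsto_lowerbound[OF lim this] show False by simp
qed

lemma asy_sum:
  assumes "finite S" "S \<noteq> {}" "\<forall>k\<in>S. \<exists>m a. a > 0 \<and> asy (f k) m a"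
  shows "\<exists>m a. a > 0 \<and> asy (\<lambda>e. \<Sum>k\<in>S. f k e) m a"
  using assms
proof (induction S rule: finite_ne_induct)
  case (singleton x) then show ?case by simp
next
  case (insert x F)
  then obtain m a where "a > 0" "asy (\<lambda>e. \<Sum>k\<in>F. f k e) m a" by auto
  moreover obtain m' a' where "a' > 0" "asy (f x) m' a'" using insert by auto
  ultimately show ?case using asy_add[of "f x" m' a' "\<lambda>e. \<Sum>k\<in>F. f k e" m a] insert by auto
qed

lemma condD_asy:
  assumes "lm \<le> lp" "a lm > 0" "\<forall>\<epsilon>\<in>{0<..\<epsilon>0}. f \<epsilon> = (\<Sum>l=lm..lp. a l * \<epsilon> ^ l) + rem \<epsilon>"
    "((\<lambda>\<epsilon>. rem \<epsilon> / \<epsilon> ^ lp) \<longlongrightarrow> 0) (at_right 0)" "0 < \<epsilon>0"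
  shows "asy f lm (a lm)"
proof -
  have "((\<lambda>e. (\<Sum>l=lm..lp. a l * e ^ (l - lm)) + rem e / e^lp * e^(lp-lm)) \<longlongrightarrow>
          (\<Sum>l=lm..lp. a l * 0 ^ (l - lm)) + 0 * 0^(lp-lm)) (at_right 0)"
    using assms(4) by (intro tendsto_intros) auto
  moreover have "(\<Sum>l=lm..lp. a l * 0 ^ (l - lm)) = (\<Sum>l\<in>{lm}. a l * 0 ^ (l - lm))"
    by (rule sum.mono_neutral_right) (use assms(1) in auto)
  ultimately have lim: "((\<lambda>e. (\<Sum>l=lm..lp. a l * e ^ (l - lm)) + rem e / e^lp * e^(lp-lm)) \<longlongrightarrow> a lm) (at_right 0)"
    by simp
  have "eventually (\<lambda>e. (\<Sum>l=lm..lp. a l * e ^ (l - lm)) + rem e / e^lp * e^(lp-lm) = f e / e^lm) (at_right 0)"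
    using ev_le[OF assms(5)]
  proof eventually_elim
    case (elim e)
    have p: "e^lp = e^lm * e^(lp-lm)" using assms(1) by (simp add: power_add[symmetric])
    have "(\<Sum>l=lm..lp. a l * e ^ (l - lm)) = (\<Sum>l=lm..lp. a l * e ^ l) / e^lm"
      unfolding sum_divide_distrib
    proof (rule sum.cong)
      fix l assume "l \<in> {lm..lp}"
      then have "e^l = e^lm * e^(l-lm)" by (simp add: power_add[symmetric])
      then show "a l * e ^ (l - lm) = a l * e ^ l / e ^ lm" using elim by simp
    qed simp
    moreover have "rem e / e^lp * e^(lp-lm) = rem e / e^lm" using p elim by (simp add: field_simps)
    ultimately show ?case using assms(3) elim by (simp add: add_divide_distrib)
  qed
  with lim show ?thesis unfolding asy_def by (rule Lim_transform_eventually)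
qed

lemma asy_condD:
  assumes "asy f m a" "a > 0" "0 < \<epsilon>0"
  shows "\<exists>(lm::nat) (lp::nat) (c::nat \<Rightarrow> real) (rem::real \<Rightarrow> real).
        lm \<le> lp \<and> c lm > 0 \<and>
        (\<forall>\<epsilon>\<in>{0<..\<epsilon>0}. f \<epsilon> = (\<Sum>l=lm..lp. c l * \<epsilon> ^ l) + rem \<epsilon>) \<and>
        ((\<lambda>\<epsilon>. rem \<epsilon> / \<epsilon> ^ lp) \<longlongrightarrow> 0) (at_right 0)"
proof -
  have L: "((\<lambda>\<epsilon>. (f \<epsilon> - a * \<epsilon>^m) / \<epsilon> ^ m) \<longlongrightarrow> 0) (at_right 0)"
  proof -
    have "((\<lambda>e. f e / e^m - a) \<longlongrightarrow> a - a) (at_right 0)"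
      using assms(1) unfolding asy_def by (intro tendsto_intros)
    moreover have "eventually (\<lambda>e. f e / e^m - a = (f e - a * e^m) / e ^ m) (at_right 0)"
      using ev_pos by eventually_elim (simp add: diff_divide_distrib)
    ultimately show ?thesis by (simp add: Lim_transform_eventually)
  qed
  show ?thesis
    by (rule exI[of _ m], rule exI[of _ m], rule exI[of _ "\<lambda>_. a"], rule exI[of _ "\<lambda>e. f e - a*e^m"])
      (use L assms in auto)
qed

lemma path_of_tranclp:
  assumes "(\<lambda>c b. b \<in> Z c)\<^sup>+\<^sup>+ a b"
  shows "\<exists>n::nat. \<exists>l::nat \<Rightarrow> nat. n \<ge> 1 \<and> l 0 = a \<and> l n = b \<and> (\<forall>k<n. l (Suc k) \<in> Z (l k))"
  using assms
proof (induction rule: tranclp.induct)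
  case (r_into_trancl a b)
  show ?case
    by (rule exI[of _ 1], rule exI[of _ "\<lambda>k. if k = 0 then a else b"]) (use r_into_trancl in auto)
next
  case (trancl_into_trancl a b c)
  then obtain n l where nl: "n \<ge> 1" "l 0 = a" "l n = b" "\<forall>k<n. l (Suc k) \<in> Z (l k)" by blast
  show ?case
  proof (rule exI[of _ "Suc n"], rule exI[of _ "l(Suc n := c)"], intro conjI allI impI)
    fix k assume "k < Suc n"
    then show "(l(Suc n := c)) (Suc k) \<in> Z ((l(Suc n := c)) k)"
      using nl trancl_into_trancl(2) by (cases "k = n") auto
  qed (use nl in auto)
qed

lemma reach:
  assumes XY: "\<forall>i\<in>X. Y i \<subseteq> X" and a: "a \<in> X" "a \<noteq> r"
    and path: "l 0 = a" "\<forall>k<n. l (Suc k) \<in> Y (l k)" and n: "n \<ge> 1"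
  shows "l n \<in> X \<and> (l n \<noteq> r \<longrightarrow> (\<lambda>c b. b \<in> red_Y X Y r c)\<^sup>+\<^sup>+ a (l n)) \<and>
     (l n = r \<longrightarrow> (\<exists>c. c \<in> X \<and> c \<noteq> r \<and> (\<lambda>c b. b \<in> red_Y X Y r c)\<^sup>*\<^sup>* a c \<and> r \<in> Y c))"
  using path n
proof (induction n)
  case 0 then show ?case by simp
next
  case (Suc n)
  let ?Q = "\<lambda>c b. b \<in> red_Y X Y r c"
  show ?case
  proof (cases "n = 0")
    case True
    then have b: "l 1 \<in> Y a" using Suc.prems by auto
    then have "l 1 \<in> X" using XY a by auto
    moreover have "l 1 \<noteq> r \<Longrightarrow> ?Q a (l 1)" using b \<open>l 1 \<in> X\<close>
      by (auto simp: red_Y_def Yplus_def)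
    ultimately show ?thesis using True a b by auto
  next
    case False
    then have IH: "l n \<in> X \<and> (l n \<noteq> r \<longrightarrow> ?Q\<^sup>+\<^sup>+ a (l n)) \<and>
     (l n = r \<longrightarrow> (\<exists>c. c \<in> X \<and> c \<noteq> r \<and> ?Q\<^sup>*\<^sup>* a c \<and> r \<in> Y c))"
      using Suc by auto
    have st: "l (Suc n) \<in> Y (l n)" using Suc.prems by auto
    then have X: "l (Suc n) \<in> X" using IH XY by auto
    show ?thesis
    proof (cases "l n = r")
      case True
      then obtain c where c: "c \<in> X" "c \<noteq> r" "?Q\<^sup>*\<^sup>* a c" "r \<in> Y c" using IH by auto
      have "l (Suc n) \<noteq> r \<Longrightarrow> ?Q c (l (Suc n))" using c st X True
        by (auto simp: red_Y_def Yminus_def)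
      then have "l (Suc n) \<noteq> r \<Longrightarrow> ?Q\<^sup>+\<^sup>+ a (l (Suc n))"
        using c(3) by (meson rtranclp_into_tranclp1)
      then show ?thesis using X c by blast
    next
      case False
      then have t: "?Q\<^sup>+\<^sup>+ a (l n)" using IH by auto
      have "l (Suc n) \<noteq> r \<Longrightarrow> ?Q (l n) (l (Suc n))" using st X
        by (auto simp: red_Y_def Yplus_def)
      then have "l (Suc n) \<noteq> r \<Longrightarrow> ?Q\<^sup>+\<^sup>+ a (l (Suc n))"
        using t by (metis tranclp.trancl_into_trancl)
      moreover have "l (Suc n) = r \<Longrightarrow> \<exists>c. c \<in> X \<and> c \<noteq> r \<and> ?Q\<^sup>*\<^sup>* a c \<and> r \<in> Y c"
        using st IH False t by (intro exI[of _ "l n"]) auto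
      ultimately show ?thesis using X by blast
    qed
  qed
qed

theorem theorem2:
  fixes N :: nat and p :: "real \<Rightarrow> nat \<Rightarrow> nat \<Rightarrow> real"
    and Y :: "nat \<Rightarrow> nat set" and \<epsilon>0 :: real and r :: nat
  assumes "stochastic {1..N} p"
    and "condA {1..N} Y \<epsilon>0 p"
    and "condD {1..N} Y \<epsilon>0 p"
    and "r \<in> {1..N}"
  shows "condA ({1..N} - {r}) (red_Y {1..N} Y r) \<epsilon>0 (red_p p r)
       \<and> condD ({1..N} - {r}) (red_Y {1..N} Y r) \<epsilon>0 (red_p p r)"
proof -
  let ?X = "{1..N}"
  let ?Q = "\<lambda>c b. b \<in> red_Y ?X Y r c"
  have rX: "r \<in> ?X" using assms(4) .
  have e0: "0 < \<epsilon>0" "\<epsilon>0 \<le> 1" and XY: "\<forall>i\<in>?X. Y i \<subseteq> ?X"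
    and pz: "\<forall>\<epsilon>\<in>{0<..\<epsilon>0}. \<forall>i\<in>?X. \<forall>j\<in>?X. (j \<in> Y i \<longrightarrow> p \<epsilon> i j > 0) \<and> (j \<notin> Y i \<longrightarrow> p \<epsilon> i j = 0)"
    and irr: "\<forall>i\<in>?X. \<forall>j\<in>?X. \<exists>n::nat. \<exists>l::nat \<Rightarrow> nat.
         n \<ge> 1 \<and> l 0 = i \<and> l n = j \<and> (\<forall>k<n. l (Suc k) \<in> Y (l k))"
    using assms(2) unfolding condA_def by auto
  have nn: "0 \<le> p \<epsilon> i j" if "\<epsilon>\<in>{0<..\<epsilon>0}" "i\<in>?X" "j\<in>?X" for \<epsilon> i j
    using assms(1) e0 that unfolding stochastic_def by auto
  have sm: "(\<Sum>j\<in>?X. p \<epsilon> i j) = 1" if "\<epsilon>\<in>{0<..\<epsilon>0}" "i\<in>?X" for \<epsilon> i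
    using assms(1) e0 that unfolding stochastic_def by auto
  have pos: "p \<epsilon> i j > 0" if "\<epsilon>\<in>{0<..\<epsilon>0}" "i\<in>?X" "j\<in>Y i" for \<epsilon> i j
    using pz XY that by blast
  have zer: "p \<epsilon> i j = 0" if "\<epsilon>\<in>{0<..\<epsilon>0}" "i\<in>?X" "j\<in>?X" "j \<notin> Y i" for \<epsilon> i j
    using pz that by blast
  define D where "D \<epsilon> = 1 - p \<epsilon> r r" for \<epsilon>
  have Dsum: "D \<epsilon> = (\<Sum>k\<in>?X-{r}. p \<epsilon> r k)" if "\<epsilon>\<in>{0<..\<epsilon>0}" for \<epsilon>
    using sm[OF that rX] sum.remove[of ?X r "p \<epsilon> r"] rX unfolding D_def by auto
  have prj_le: "p \<epsilon> r j \<le> D \<epsilon>" if "\<epsilon>\<in>{0<..\<epsilon>0}" "j \<in> ?X - {r}" for \<epsilon> j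
    unfolding Dsum[OF that(1)] by (rule member_le_sum) (use that nn rX in auto)
  have asyp: "\<exists>m a. a > 0 \<and> asy (\<lambda>\<epsilon>. p \<epsilon> i k) m a" if ik: "i \<in> ?X" "k \<in> Y i" for i k
  proof -
    obtain lm lp a rem where "lm \<le> lp" "a lm > 0"
      "\<forall>\<epsilon>\<in>{0<..\<epsilon>0}. p \<epsilon> i k = (\<Sum>l=lm..lp. a l * \<epsilon> ^ l) + rem \<epsilon>"
      "((\<lambda>\<epsilon>. rem \<epsilon> / \<epsilon> ^ lp) \<longlongrightarrow> 0) (at_right 0)"
      using assms(3)[unfolded condD_def, rule_format, OF ik] by blast
    from condD_asy[OF this e0(1)] \<open>a lm > 0\<close> show ?thesis by blast
  qed
  show ?thesis
  proof (cases "?X - {r} = {}")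
    case True
    then show ?thesis using e0 unfolding condA_def condD_def by auto
  next
    case False
    then obtain i0 where i0: "i0 \<in> ?X - {r}" by blast
    obtain n l where nl: "n \<ge> 1" "l 0 = r" "l n = i0" "\<forall>k<n. l (Suc k) \<in> Y (l k)"
      using irr rX i0 by blast
    have "\<exists>k<n. l k = r \<and> l (Suc k) \<noteq> r"
    proof (rule ccontr)
      assume "\<not> ?thesis"
      then have "\<forall>k<n. l k = r \<longrightarrow> l (Suc k) = r" by auto
      then have "k \<le> n \<Longrightarrow> l k = r" for k
        by (induction k) (use nl in auto)
      then show False using nl i0 by auto
    qed
    then obtain k where k: "k < n" "l k = r" "l (Suc k) \<noteq> r" by blast
    define k0 where "k0 = l (Suc k)"
    have k0Y: "k0 \<in> Y r" unfolding k0_def using k(1,2) nl(4) by metis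
    have k0X: "k0 \<in> ?X" using XY rX k0Y by blast
    have k0r: "k0 \<noteq> r" unfolding k0_def using k(3) .
    have k0: "k0 \<in> Y r" "k0 \<in> ?X - {r}" using k0Y k0X k0r by auto
    have Dpos: "D \<epsilon> > 0" if "\<epsilon>\<in>{0<..\<epsilon>0}" for \<epsilon>
      using prj_le[OF that k0(2)] pos[OF that rX k0(1)] by linarith
    have redp: "red_p p r \<epsilon> i j = p \<epsilon> i j + p \<epsilon> i r * (p \<epsilon> r j / D \<epsilon>)" for \<epsilon> i j
      unfolding red_p_def D_def ..
    have A: "condA (?X - {r}) (red_Y ?X Y r) \<epsilon>0 (red_p p r)"
      unfolding condA_def
    proof (intro conjI ballI impI)
      show "0 < \<epsilon>0" "\<epsilon>0 \<le> 1" using e0 by auto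
    next
      fix i assume "i \<in> ?X - {r}"
      then show "red_Y ?X Y r i \<subseteq> ?X - {r}" unfolding red_Y_def Yminus_def Yplus_def by auto
    next
      fix \<epsilon> i j assume h: "\<epsilon> \<in> {0<..\<epsilon>0}" "i \<in> ?X - {r}" "j \<in> ?X - {r}" "j \<in> red_Y ?X Y r i"
      have q: "0 \<le> p \<epsilon> i r * (p \<epsilon> r j / D \<epsilon>)"
        using nn[OF h(1)] Dpos[OF h(1)] h rX by auto
      show "0 < red_p p r \<epsilon> i j"
      proof (cases "j \<in> Y i")
        case True
        then show ?thesis unfolding redp using q pos[OF h(1), of i j] h by auto
      next
        case False
        then have "r \<in> Y i" "j \<in> Y r" using h(4) unfolding red_Y_def Yminus_def Yplus_def
          by (auto split: if_splits)
        then have "0 < p \<epsilon> i r * (p \<epsilon> r j / D \<epsilon>)"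
          using pos[OF h(1)] Dpos[OF h(1)] h rX by auto
        then show ?thesis unfolding redp using nn[OF h(1), of i j] h by auto
      qed
    next
      fix \<epsilon> i j assume h: "\<epsilon> \<in> {0<..\<epsilon>0}" "i \<in> ?X - {r}" "j \<in> ?X - {r}" "j \<notin> red_Y ?X Y r i"
      then have "j \<notin> Y i" "r \<notin> Y i \<or> j \<notin> Y r" unfolding red_Y_def Yminus_def Yplus_def by auto
      then have "p \<epsilon> i j = 0" "p \<epsilon> i r = 0 \<or> p \<epsilon> r j = 0"
        using zer[OF h(1)] h rX by auto
      then show "red_p p r \<epsilon> i j = 0" unfolding redp by auto
    next
      fix i j assume h: "i \<in> ?X - {r}" "j \<in> ?X - {r}"
      then obtain n l where nl: "n \<ge> 1" "l 0 = i" "l n = j" "\<forall>k<n. l (Suc k) \<in> Y (l k)"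
        using irr by blast
      have "?Q\<^sup>+\<^sup>+ i j" using reach[OF XY _ _ nl(2,4,1)] h nl(3) by auto
      from path_of_tranclp[OF this]
      show "\<exists>n::nat. \<exists>l::nat \<Rightarrow> nat. n \<ge> 1 \<and> l 0 = i \<and> l n = j \<and> (\<forall>k<n. l (Suc k) \<in> red_Y ?X Y r (l k))" .
    qed
    have asyD: "\<exists>m b. b > 0 \<and> asy D m b"
    proof -
      let ?S = "Y r - {r}"
      have SX: "?S \<subseteq> ?X - {r}" using XY rX by blast
      have S: "finite ?S" "?S \<noteq> {}" using k0 SX finite_subset[OF SX] by auto
      have "\<exists>m b. b>0 \<and> asy (\<lambda>e. \<Sum>k\<in>?S. p e r k) m b"
        by (rule asy_sum) (use S asyp rX in auto)
      then obtain m b where "b>0" "asy (\<lambda>e. \<Sum>k\<in>?S. p e r k) m b" by blast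
      moreover have "eventually (\<lambda>e. (\<Sum>k\<in>?S. p e r k) = D e) (at_right 0)"
        using ev_le[OF e0(1)]
      proof eventually_elim
        case (elim e)
        then have e: "e \<in> {0<..\<epsilon>0}" by auto
        show ?case unfolding Dsum[OF e]
          by (intro sum.mono_neutral_left) (use SX rX zer[OF e] in auto)
      qed
      ultimately show ?thesis using asy_cong by blast
    qed
    then obtain m0 b0 where b0: "b0 > 0" "asy D m0 b0" by blast
    have asyq: "\<exists>m a. a > 0 \<and> asy (\<lambda>e. p e r j / D e) m a" if j: "j \<in> ?X - {r}" "j \<in> Y r" for j
    proof -
      obtain m1 a1 where a1: "a1 > 0" "asy (\<lambda>e. p e r j) m1 a1" using asyp[OF rX j(2)] by blast
      have "eventually (\<lambda>e. 0 < p e r j \<and> p e r j \<le> D e) (at_right 0)"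
        using ev_le[OF e0(1)] by eventually_elim (use pos rX j prj_le in auto)
      then have mm: "m0 \<le> m1" by (rule asy_cmp[OF a1(2) b0(2) a1(1) b0(1)])
      have "asy (\<lambda>e. p e r j / D e) (m1 - m0) (a1 / b0)"
        using asy_div[OF a1(2) b0(2) mm] b0 by auto
      moreover have "a1 / b0 > 0" using a1 b0 by simp
      ultimately show ?thesis by blast
    qed
    have asyr: "\<exists>m a. a > 0 \<and> asy (\<lambda>e. p e i r * (p e r j / D e)) m a"
      if h: "i \<in> ?X - {r}" "r \<in> Y i" "j \<in> ?X - {r}" "j \<in> Y r" for i j
    proof -
      obtain m1 a1 where a1: "a1 > 0" "asy (\<lambda>e. p e i r) m1 a1" using asyp h by blast
      obtain m2 a2 where a2: "a2 > 0" "asy (\<lambda>e. p e r j / D e) m2 a2" using asyq h by blast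
      from asy_mult[OF a1(2) a2(2)] a1(1) a2(1) show ?thesis using mult_pos_pos by blast
    qed
    have Dp: "condD (?X - {r}) (red_Y ?X Y r) \<epsilon>0 (red_p p r)"
      unfolding condD_def
    proof (intro ballI)
      fix i j assume h: "i \<in> ?X - {r}" "j \<in> red_Y ?X Y r i"
      have jX: "j \<in> ?X - {r}" using h unfolding red_Y_def Yminus_def Yplus_def by (auto split: if_splits)
      have "\<exists>m a. a > 0 \<and> asy (\<lambda>e. red_p p r e i j) m a"
      proof (cases "j \<in> Y i")
        case True
        obtain m1 a1 where a1: "a1 > 0" "asy (\<lambda>e. p e i j) m1 a1" using asyp h True by blast
        show ?thesis
        proof (cases "r \<in> Y i \<and> j \<in> Y r")
          case True
          obtain m2 a2 where a2: "a2 > 0" "asy (\<lambda>e. p e i r * (p e r j / D e)) m2 a2"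
            using asyr h jX True by blast
          from asy_add[OF a1(2) a2(2) a1(1) a2(1)] show ?thesis by (simp add: redp)
        next
          case False
          have "eventually (\<lambda>e. p e i j = red_p p r e i j) (at_right 0)"
            using ev_le[OF e0(1)]
          proof eventually_elim
            case (elim e)
            then have e: "e \<in> {0<..\<epsilon>0}" by auto
            have "p e i r = 0 \<or> p e r j = 0" using False zer[OF e] h jX rX by auto
            then show ?case unfolding redp by auto
          qed
          then have "asy (\<lambda>e. red_p p r e i j) m1 a1"
            using asy_cong[OF a1(2), of "\<lambda>e. red_p p r e i j"] by simp
          with a1(1) show ?thesis by blast
        qed
      next
        case False
        then have ry: "r \<in> Y i" "j \<in> Y r" using h(2) unfolding red_Y_def Yminus_def Yplus_def
          by (auto split: if_splits)
        obtain m2 a2 where a2: "a2 > 0" "asy (\<lambda>e. p e i r * (p e r j / D e)) m2 a2"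
          using asyr h jX ry by blast
        have "eventually (\<lambda>e. p e i r * (p e r j / D e) = red_p p r e i j) (at_right 0)"
          using ev_le[OF e0(1)]
        proof eventually_elim
          case (elim e)
          then have e: "e \<in> {0<..\<epsilon>0}" by auto
          have "p e i j = 0" using False zer[OF e] h jX by auto
          then show ?case unfolding redp by auto
        qed
        then have "asy (\<lambda>e. red_p p r e i j) m2 a2"
          using asy_cong[OF a2(2), of "\<lambda>e. red_p p r e i j"] by simp
        with a2(1) show ?thesis by blast
      qed
      then obtain m a where "a > 0" "asy (\<lambda>e. red_p p r e i j) m a" by blast
      from asy_condD[OF this(2,1) e0(1)]
      show "\<exists>(lm::nat) (lp::nat) (a::nat \<Rightarrow> real) (rem::real \<Rightarrow> real).
        lm \<le> lp \<and> a lm > 0 \<and>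
        (\<forall>\<epsilon>\<in>{0<..\<epsilon>0}. red_p p r \<epsilon> i j = (\<Sum>l=lm..lp. a l * \<epsilon> ^ l) + rem \<epsilon>) \<and>
        ((\<lambda>\<epsilon>. rem \<epsilon> / \<epsilon> ^ lp) \<longlongrightarrow> 0) (at_right 0)" .
    qed
    from A Dp show ?thesis by blast
  qed
qed

end
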